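(* Let $1<p\le 2$, let $k\ge 0$ be an integer, and let $f:V(G_k)\to L_p$ be any map. Let $\{s,t\}=V(G_0)$ and for $1\le i\le k$ let $A_i$ denote the set of level $i$ anti-edges. Then $$\|f(s)-f(t)\|_p^2+(p-1)\sum_{i=1}^k\sum_{\{x,y\}\in A_i}\|f(x)-f(y)\|_p^2\le \sum_{(x,y)\in E(G_k)}\|f(x)-f(y)\|_p^2.$$
   Context: The diamond graphs $\{G_k\}_{k\ge 0}$ are defined recursively: $G_0$ consists of a single edge of length $1$ between two vertices $s,t$. For $i\ge 1$, $G_i$ is obtained from $G_{i-1}$ by replacing every edge $(u,v)$ of $G_{i-1}$ by a quadrilateral $u,a,v,b$ (with new vertices $a,b$) whose four edges $(u,a),(a,v),(v,b),(b,u)$ have length $2^{-i}$; the edge $(u,v)$ is called an edge of level $i-1$, and the pair $\{a,b\}$ is called the level $i$ anti-edge corresponding to $(u,v)$. Thus $V(G_{i-1})\subseteq V(G_i)$ and all anti-edges of levels $1,\dots,k$ are pairs of vertices of $G_k$. $E(G_k)$ is the edge set of $G_k$. $L_p$ denotes the Lebesgue space $L_p$ with norm $\|\cdot\|_p$. *)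

theory Defs
  imports "HOL-Analysis.Analysis"
begin

(* Vertices of diamond graphs: S, T are the vertices of G_0; Mid b u v is one of the two
   new vertices (b = True gives a, b = False gives b) created when edge (u,v) is replaced
   by a quadrilateral. *)
datatype dvert = S | T | Mid bool dvert dvert

fun diamond_edges :: "nat \<Rightarrow> (dvert \<times> dvert) set" where
  "diamond_edges 0 = {(S, T)}"
| "diamond_edges (Suc i) =
     (\<Union>(u, v) \<in> diamond_edges i.
        {(u, Mid True u v), (Mid True u v, v), (u, Mid False u v), (Mid False u v, v)})"

definition diamond_vertices :: "nat \<Rightarrow> dvert set" where
  "diamond_vertices k = fst ` diamond_edges k \<union> snd ` diamond_edges k"

(* Level i anti-edges (i >= 1): the pair {a,b} created from an edge (u,v) of level i-1,
   represented by the ordered pair (a,b). *)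
definition anti_edges :: "nat \<Rightarrow> (dvert \<times> dvert) set" where
  "anti_edges i = (\<lambda>(u, v). (Mid True u v, Mid False u v)) ` diamond_edges (i - 1)"

definition in_Lp :: "'m measure \<Rightarrow> real \<Rightarrow> ('m \<Rightarrow> real) \<Rightarrow> bool" where
  "in_Lp M p g \<longleftrightarrow> g \<in> borel_measurable M \<and> integrable M (\<lambda>x. \<bar>g x\<bar> powr p)"

definition Lp_norm :: "'m measure \<Rightarrow> real \<Rightarrow> ('m \<Rightarrow> real) \<Rightarrow> real" where
  "Lp_norm M p g = (\<integral>x. \<bar>g x\<bar> powr p \<partial>M) powr (1 / p)"

end

theory Submission
  imports Defs
begin

lemma powr_concave_pos: assumes "0 < r" "r \<le> 1" shows "convex_on {0<..} (\<lambda>x::real. - (x powr r))"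
proof (rule f''_ge0_imp_convex[where f' = "\<lambda>x. - (r * x powr (r - 1))" and f'' = "\<lambda>x. - (r * ((r - 1) * x powr (r - 1 - 1)))"])
  show "convex {0::real<..}" by simp
  fix x :: real assume x: "x \<in> {0<..}"
  show "((\<lambda>x::real. - (x powr r)) has_real_derivative - (r * x powr (r - 1))) (at x)"
    using x by (auto intro!: derivative_eq_intros)
  show "((\<lambda>x. - (r * x powr (r - 1))) has_real_derivative - (r * ((r - 1) * x powr (r - 1 - 1)))) (at x)"
    using x by (auto intro!: derivative_eq_intros)
  show "0 \<le> - (r * ((r - 1) * x powr (r - 1 - 1)))"
    using x assms mult_nonneg_nonpos[of r "(r-1) * x powr (r-1-1)"] mult_nonpos_nonneg[of "r-1" "x powr (r-1-1)"]
    by simp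
qed

lemma powr_concave_ineq:
  fixes r u v l :: real
  assumes r: "0 < r" "r \<le> 1" and uv: "0 \<le> u" "0 \<le> v" and l: "0 \<le> l" "l \<le> 1"
  shows "l * u powr r + (1 - l) * v powr r \<le> (l * u + (1 - l) * v) powr r"
proof (cases "u = 0 \<or> v = 0")
  case False
  then have "u > 0" "v > 0" using uv by auto
  then have "- (((1 - l) *\<^sub>R v + l *\<^sub>R u) powr r) \<le> (1 - l) * (- (v powr r)) + l * (- (u powr r))"
    using convex_onD[OF powr_concave_pos[OF r], of l v u] l by auto
  then show ?thesis by (simp add: algebra_simps)
next
  case True
  then show ?thesis
  proof
    assume u: "u = 0"
    have "(1 - l) * v powr r \<le> (1 - l) powr r * v powr r"
      using powr_mono'[of r 1 "1 - l"] r l by (intro mult_right_mono) auto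
    then show ?thesis using u l uv r by (simp add: powr_mult)
  next
    assume v: "v = 0"
    have "l * u powr r \<le> l powr r * u powr r"
      using powr_mono'[of r 1 l] r l by (intro mult_right_mono) auto
    then show ?thesis using v l uv r by (simp add: powr_mult)
  qed
qed

lemma bernoulli_powr:
  fixes r x :: real
  assumes "0 < r" "r \<le> 1" "0 \<le> x"
  shows "(1 + x) powr r \<le> 1 + r * x"
  using Youngs_inequality_0[of r "1 - r" "1 + x" 1] assms by (simp add: algebra_simps)

lemma amgm2: fixes a b :: real assumes "0 < a" "0 < b" "1 \<le> a * b" shows "2 \<le> a + b"
proof (rule ccontr)
  assume "\<not> 2 \<le> a + b"
  then have "(a + b)^2 < 2^2" using assms by (intro power_strict_mono) auto
  moreover have "(a + b)^2 \<ge> 4 * (a * b)" using sum_squares_ge_zero[of "a - b" 0]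
    by (simp add: power2_eq_square algebra_simps)
  ultimately show False using assms by simp
qed

lemma step_A:
  fixes q t :: real
  assumes q: "0 < q" "q \<le> 1" and t: "0 \<le> t" "t \<le> 1"
  shows "2 * q * t \<le> (1 + t) powr q - (1 - t) powr q"
proof -
  let ?f = "\<lambda>x::real. (1 + x) powr q - (1 - x) powr q - 2 * q * x"
  have "?f 0 \<le> ?f t"
  proof (rule DERIV_nonneg_imp_increasing_open[OF t(1)])
    fix x assume x: "0 < x" "x < t"
    have d: "(?f has_real_derivative (q * (1 + x) powr (q - 1) + q * (1 - x) powr (q - 1) - 2 * q)) (at x)"
      using x t by (auto intro!: derivative_eq_intros)
    have ab: "(1 + x) powr (q - 1) + (1 - x) powr (q - 1) \<ge> 2"
    proof -
      have xy1: "0 < (1 + x) * (1 - x)" using x t by (intro mult_pos_pos) auto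
      have xy2: "(1 + x) * (1 - x) \<le> 1" using x t by (auto simp: algebra_simps)
      note xy = xy1 xy2
      have "1 \<le> ((1 + x) * (1 - x)) powr (q - 1)"
        using powr_mono'[of "q - 1" 0 "(1 + x) * (1 - x)"] xy q x t by simp
      then have prod: "1 \<le> (1 + x) powr (q - 1) * (1 - x) powr (q - 1)"
        using xy x t by (simp add: powr_mult)
      have pos: "0 < (1 + x) powr (q - 1)" "0 < (1 - x) powr (q - 1)" using x t by auto
      show ?thesis using amgm2[OF pos prod] .
    qed
    have "0 \<le> q * ((1 + x) powr (q - 1) + (1 - x) powr (q - 1) - 2)"
      using ab q by simp
    then show "\<exists>y. (?f has_real_derivative y) (at x) \<and> 0 \<le> y"
      using d by (intro exI[of _ "q * (1 + x) powr (q - 1) + q * (1 - x) powr (q - 1) - 2 * q"])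
        (simp add: algebra_simps)
  next
    show "continuous_on {0..t} ?f"
      using t q by (intro continuous_intros continuous_on_powr') auto
  qed
  then show ?thesis by simp
qed

lemma step_B:
  fixes p t :: real
  assumes p: "1 < p" "p \<le> 2" and t: "0 \<le> t" "t \<le> 1"
  shows "2 + p * (p - 1) * t\<^sup>2 \<le> (1 + t) powr p + (1 - t) powr p"
proof -
  let ?f = "\<lambda>x::real. (1 + x) powr p + (1 - x) powr p - 2 - p * (p - 1) * x\<^sup>2"
  have "?f 0 \<le> ?f t"
  proof (rule DERIV_nonneg_imp_increasing_open[OF t(1)])
    fix x assume x: "0 < x" "x < t"
    have d: "(?f has_real_derivative (p * (1 + x) powr (p - 1) - p * (1 - x) powr (p - 1) - p * (p - 1) * (2 * x))) (at x)"
      using x t by (auto intro!: derivative_eq_intros)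
    have "2 * (p - 1) * x \<le> (1 + x) powr (p - 1) - (1 - x) powr (p - 1)"
      using step_A[of "p - 1" x] p x t by simp
    then have "0 \<le> p * ((1 + x) powr (p - 1) - (1 - x) powr (p - 1) - 2 * (p - 1) * x)"
      using p by simp
    then show "\<exists>y. (?f has_real_derivative y) (at x) \<and> 0 \<le> y"
      using d by (intro exI[of _ "p * (1 + x) powr (p - 1) - p * (1 - x) powr (p - 1) - p * (p - 1) * (2 * x)"])
        (simp add: algebra_simps)
  next
    show "continuous_on {0..t} ?f"
      using t p by (intro continuous_intros continuous_on_powr') auto
  qed
  then show ?thesis by simp
qed

lemma sq_powr: fixes x p :: real shows "(x\<^sup>2) powr (p / 2) = \<bar>x\<bar> powr p"
proof (cases "x = 0")
  case False
  then have e: "x\<^sup>2 = \<bar>x\<bar> powr 2" by (simp add: powr_numeral)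
  have "(x\<^sup>2) powr (p / 2) = (\<bar>x\<bar> powr 2) powr (p / 2)" by (simp only: e)
  also have "\<dots> = \<bar>x\<bar> powr (2 * (p / 2))" by (rule powr_powr)
  finally show ?thesis by simp
qed simp

lemma two_point_unit:
  fixes p s :: real
  assumes p: "1 < p" "p \<le> 2" and s: "\<bar>s\<bar> \<le> 1"
  shows "(1 + (p - 1) * s\<^sup>2) powr (p / 2) \<le> (\<bar>1 + s\<bar> powr p + \<bar>1 - s\<bar> powr p) / 2"
proof -
  define t where "t = \<bar>s\<bar>"
  have t: "0 \<le> t" "t \<le> 1" using s by (auto simp: t_def)
  have st: "s\<^sup>2 = t\<^sup>2" by (simp add: t_def)
  have sum: "\<bar>1 + s\<bar> powr p + \<bar>1 - s\<bar> powr p = (1 + t) powr p + (1 - t) powr p"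
    using s by (cases "s \<ge> 0") (auto simp: t_def)
  have "(1 + (p - 1) * t\<^sup>2) powr (p / 2) \<le> 1 + (p / 2) * ((p - 1) * t\<^sup>2)"
    using bernoulli_powr[of "p / 2" "(p - 1) * t\<^sup>2"] p by simp
  also have "\<dots> \<le> ((1 + t) powr p + (1 - t) powr p) / 2"
    using step_B[OF p t] by (simp add: field_simps)
  finally show ?thesis by (simp add: st sum)
qed

lemma two_point_le:
  fixes p a b :: real
  assumes p: "1 < p" "p \<le> 2" and ab: "\<bar>b\<bar> \<le> \<bar>a\<bar>"
  shows "(a\<^sup>2 + (p - 1) * b\<^sup>2) powr (p / 2) \<le> (\<bar>a + b\<bar> powr p + \<bar>a - b\<bar> powr p) / 2"
proof (cases "a = 0")
  case True
  then show ?thesis using ab by simp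
next
  case False
  define s where "s = b / a"
  have s: "\<bar>s\<bar> \<le> 1" using ab False by (simp add: s_def abs_divide divide_le_eq_1)
  have b: "b = a * s" using False by (simp add: s_def)
  have apos: "\<bar>a\<bar> > 0" using False by simp
  have e1: "a\<^sup>2 + (p - 1) * b\<^sup>2 = \<bar>a\<bar> powr 2 * (1 + (p - 1) * s\<^sup>2)"
    using apos by (simp add: b powr_numeral power_mult_distrib algebra_simps)
  have e2: "\<bar>a + b\<bar> = \<bar>a\<bar> * \<bar>1 + s\<bar>" "\<bar>a - b\<bar> = \<bar>a\<bar> * \<bar>1 - s\<bar>"
    by (simp_all add: b abs_mult[symmetric] algebra_simps)
  have pos: "0 \<le> 1 + (p - 1) * s\<^sup>2" using p by simp
  have "(a\<^sup>2 + (p - 1) * b\<^sup>2) powr (p / 2) = (a\<^sup>2) powr (p / 2) * (1 + (p - 1) * s\<^sup>2) powr (p / 2)"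
  proof -
    have "a\<^sup>2 + (p - 1) * b\<^sup>2 = a\<^sup>2 * (1 + (p - 1) * s\<^sup>2)"
      by (simp add: b power_mult_distrib algebra_simps)
    then show ?thesis using pos by (simp add: powr_mult)
  qed
  also have "\<dots> = \<bar>a\<bar> powr p * (1 + (p - 1) * s\<^sup>2) powr (p / 2)"
    by (simp add: sq_powr)
  also have "\<dots> \<le> \<bar>a\<bar> powr p * ((\<bar>1 + s\<bar> powr p + \<bar>1 - s\<bar> powr p) / 2)"
    using two_point_unit[OF p s] by (intro mult_left_mono) auto
  also have "\<dots> = (\<bar>a + b\<bar> powr p + \<bar>a - b\<bar> powr p) / 2"
    by (simp add: e2 powr_mult algebra_simps)
  finally show ?thesis .
qed

lemma two_point:
  fixes p a b :: real
  assumes p: "1 < p" "p \<le> 2"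
  shows "(a\<^sup>2 + (p - 1) * b\<^sup>2) powr (p / 2) \<le> (\<bar>a + b\<bar> powr p + \<bar>a - b\<bar> powr p) / 2"
proof (cases "\<bar>b\<bar> \<le> \<bar>a\<bar>")
  case True
  then show ?thesis using two_point_le[OF p] by blast
next
  case False
  have "a\<^sup>2 \<le> b\<^sup>2" using False by (simp add: abs_le_square_iff)
  then have le: "a\<^sup>2 + (p - 1) * b\<^sup>2 \<le> b\<^sup>2 + (p - 1) * a\<^sup>2"
  proof -
    have "(2 - p) * a\<^sup>2 \<le> (2 - p) * b\<^sup>2" using p \<open>a\<^sup>2 \<le> b\<^sup>2\<close> by (intro mult_left_mono) auto
    then show ?thesis by (simp add: algebra_simps)
  qed
  have "(a\<^sup>2 + (p - 1) * b\<^sup>2) powr (p / 2) \<le> (b\<^sup>2 + (p - 1) * a\<^sup>2) powr (p / 2)"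
    using le p by (intro powr_mono2) auto
  also have "\<dots> \<le> (\<bar>b + a\<bar> powr p + \<bar>b - a\<bar> powr p) / 2"
    using two_point_le[OF p, of a b] False by simp
  also have "\<dots> = (\<bar>a + b\<bar> powr p + \<bar>a - b\<bar> powr p) / 2"
    by (simp add: abs_minus_commute add.commute)
  finally show ?thesis .
qed

lemma rev_minkowski:
  fixes G H :: "'m \<Rightarrow> real" and r :: real
  assumes r: "0 < r" "r \<le> 1"
    and nn: "\<And>x. 0 \<le> G x" "\<And>x. 0 \<le> H x"
    and iG: "integrable M (\<lambda>x. G x powr r)" and iH: "integrable M (\<lambda>x. H x powr r)"
    and iGH: "integrable M (\<lambda>x. (G x + H x) powr r)"
  shows "(\<integral>x. G x powr r \<partial>M) powr (1 / r) + (\<integral>x. H x powr r \<partial>M) powr (1 / r)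
         \<le> (\<integral>x. (G x + H x) powr r \<partial>M) powr (1 / r)"
proof -
  define a where "a = (\<integral>x. G x powr r \<partial>M)"
  define b where "b = (\<integral>x. H x powr r \<partial>M)"
  define c where "c = (\<integral>x. (G x + H x) powr r \<partial>M)"
  have a0: "0 \<le> a" unfolding a_def by (rule integral_nonneg_AE) auto
  have b0: "0 \<le> b" unfolding b_def by (rule integral_nonneg_AE) auto
  have ac: "a \<le> c" unfolding a_def c_def
    using nn r by (intro integral_mono[OF iG iGH] powr_mono2) auto
  have bc: "b \<le> c" unfolding b_def c_def
    using nn r by (intro integral_mono[OF iH iGH] powr_mono2) auto
  show ?thesis
  proof (cases "a = 0 \<or> b = 0")
    case True
    then show ?thesis
    proof
      assume "a = 0"
      then show ?thesis using bc b0 r by (simp add: a_def[symmetric] b_def[symmetric] c_def[symmetric] powr_mono2)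
    next
      assume "b = 0"
      then show ?thesis using ac a0 r by (simp add: a_def[symmetric] b_def[symmetric] c_def[symmetric] powr_mono2)
    qed
  next
    case False
    then have apos: "0 < a" and bpos: "0 < b" using a0 b0 by auto
    define A where "A = a powr (1 / r)"
    define B where "B = b powr (1 / r)"
    have Apos: "0 < A" and Bpos: "0 < B" using apos bpos by (auto simp: A_def B_def)
    have Ar: "A powr r = a" using apos r by (simp add: A_def powr_powr)
    have Br: "B powr r = b" using bpos r by (simp add: B_def powr_powr)
    define l where "l = A / (A + B)"
    have l: "0 \<le> l" "l \<le> 1" using Apos Bpos by (auto simp: l_def)
    have l1: "1 - l = B / (A + B)" using Apos Bpos by (simp add: l_def field_simps)
    have pt: "l / a * G x powr r + (1 - l) / b * H x powr r \<le> (G x + H x) powr r / (A + B) powr r" for x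
    proof -
      have "l * (G x / A) powr r + (1 - l) * (H x / B) powr r \<le> (l * (G x / A) + (1 - l) * (H x / B)) powr r"
        using nn[of x] Apos Bpos by (intro powr_concave_ineq[OF r _ _ l]) auto
      also have "l * (G x / A) + (1 - l) * (H x / B) = (G x + H x) / (A + B)"
      proof -
        have "l * (G x / A) = G x / (A + B)" using Apos by (simp add: l_def)
        moreover have "(1 - l) * (H x / B) = H x / (A + B)" using Bpos by (simp add: l1)
        ultimately show ?thesis by (simp add: add_divide_distrib)
      qed
      finally show ?thesis
        using nn[of x] Apos Bpos by (simp add: powr_divide Ar Br)
    qed
    have int_l: "(\<integral>x. l / a * G x powr r + (1 - l) / b * H x powr r \<partial>M) = l + (1 - l)"
      using iG iH apos bpos by (simp add: a_def b_def)
    have "(\<integral>x. l / a * G x powr r + (1 - l) / b * H x powr r \<partial>M) \<le> (\<integral>x. (G x + H x) powr r / (A + B) powr r \<partial>M)"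
      using iG iH iGH pt by (intro integral_mono) auto
    then have "1 \<le> c / (A + B) powr r" using int_l by (simp add: c_def)
    then have "(A + B) powr r \<le> c" using Apos Bpos by (simp add: field_simps)
    then have "((A + B) powr r) powr (1 / r) \<le> c powr (1 / r)"
      using Apos Bpos r by (intro powr_mono2) auto
    then show ?thesis using Apos Bpos r
      by (simp add: powr_powr A_def[symmetric] B_def[symmetric] a_def[symmetric] b_def[symmetric] c_def[symmetric])
  qed
qed

lemma powr_sum_bound:
  fixes u v p :: real assumes "0 < p"
  shows "\<bar>u + v\<bar> powr p \<le> 2 powr p * (\<bar>u\<bar> powr p + \<bar>v\<bar> powr p)"
proof -
  define m where "m = max \<bar>u\<bar> \<bar>v\<bar>"
  have "\<bar>u + v\<bar> \<le> 2 * m" by (simp add: m_def)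
  then have "\<bar>u + v\<bar> powr p \<le> (2 * m) powr p" using assms by (intro powr_mono2) auto
  also have "\<dots> = 2 powr p * m powr p" by (simp add: powr_mult m_def)
  also have "m powr p \<le> \<bar>u\<bar> powr p + \<bar>v\<bar> powr p" by (simp add: m_def max_def)
  finally show ?thesis by simp
qed

lemma in_Lp_add:
  assumes p: "0 < p" and X: "in_Lp M p X" and Y: "in_Lp M p Y"
  shows "in_Lp M p (\<lambda>z. X z + Y z)"
  unfolding in_Lp_def
proof
  show m: "(\<lambda>z. X z + Y z) \<in> borel_measurable M" using X Y by (auto simp: in_Lp_def)
  show "integrable M (\<lambda>z. \<bar>X z + Y z\<bar> powr p)"
  proof (rule Bochner_Integration.integrable_bound)
    show "integrable M (\<lambda>z. 2 powr p * (\<bar>X z\<bar> powr p + \<bar>Y z\<bar> powr p))"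
      using X Y by (auto simp: in_Lp_def)
    show "(\<lambda>z. \<bar>X z + Y z\<bar> powr p) \<in> borel_measurable M" using m by measurable
    show "AE z in M. norm (\<bar>X z + Y z\<bar> powr p) \<le> norm (2 powr p * (\<bar>X z\<bar> powr p + \<bar>Y z\<bar> powr p))"
      using powr_sum_bound[OF p] by auto
  qed
qed

lemma in_Lp_scale:
  assumes X: "in_Lp M p X"
  shows "in_Lp M p (\<lambda>z. c * X z)"
  using X by (auto simp: in_Lp_def abs_mult powr_mult)

lemma in_Lp_diff:
  assumes p: "0 < p" and X: "in_Lp M p X" and Y: "in_Lp M p Y"
  shows "in_Lp M p (\<lambda>z. X z - Y z)"
  using in_Lp_add[OF p X in_Lp_scale[OF Y, of "-1"]] by simp

lemma Lp_norm_sq: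
  assumes "0 < p"
  shows "(Lp_norm M p g)\<^sup>2 = (\<integral>x. \<bar>g x\<bar> powr p \<partial>M) powr (2 / p)"
proof -
  have nn: "0 \<le> (\<integral>x. \<bar>g x\<bar> powr p \<partial>M)" by (rule integral_nonneg_AE) auto
  have "(Lp_norm M p g)\<^sup>2 = ((\<integral>x. \<bar>g x\<bar> powr p \<partial>M) powr (1 / p)) powr 2"
    using nn by (simp add: Lp_norm_def powr_numeral[symmetric] del: powr_numeral)
  also have "\<dots> = (\<integral>x. \<bar>g x\<bar> powr p \<partial>M) powr (2 / p)" by (simp add: powr_powr)
  finally show ?thesis .
qed

lemma bcl:
  assumes p: "1 < p" "p \<le> 2" and X: "in_Lp M p X" and Y: "in_Lp M p Y"
  shows "(Lp_norm M p X)\<^sup>2 + (p - 1) * (Lp_norm M p Y)\<^sup>2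
         \<le> ((Lp_norm M p (\<lambda>z. X z + Y z))\<^sup>2 + (Lp_norm M p (\<lambda>z. X z - Y z))\<^sup>2) / 2"
proof -
  define r where "r = p / 2"
  have r: "0 < r" "r \<le> 1" using p by (auto simp: r_def)
  have p0: "0 < p" using p by simp
  define I where "I g = (\<integral>x. \<bar>g x\<bar> powr p \<partial>M)" for g :: "'a \<Rightarrow> real"
  have Inn: "0 \<le> I g" for g unfolding I_def by (rule integral_nonneg_AE) auto
  have XY: "in_Lp M p (\<lambda>z. X z + Y z)" "in_Lp M p (\<lambda>z. X z - Y z)"
    using in_Lp_add[OF p0 X Y] in_Lp_diff[OF p0 X Y] .
  define G where "G z = (X z)\<^sup>2" for z
  define H where "H z = (p - 1) * (Y z)\<^sup>2" for z
  have Gr: "G z powr r = \<bar>X z\<bar> powr p" for z by (simp add: G_def r_def sq_powr)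
  have Hr: "H z powr r = (p - 1) powr r * \<bar>Y z\<bar> powr p" for z
    using p by (simp add: H_def r_def sq_powr powr_mult)
  have iG: "integrable M (\<lambda>z. G z powr r)" using X by (simp add: Gr in_Lp_def)
  have iH: "integrable M (\<lambda>z. H z powr r)" using Y by (simp add: Hr in_Lp_def)
  have bound: "(G z + H z) powr r \<le> (\<bar>X z + Y z\<bar> powr p + \<bar>X z - Y z\<bar> powr p) / 2" for z
    using two_point[OF p, of "X z" "Y z"] by (simp add: G_def H_def r_def)
  have iB: "integrable M (\<lambda>z. (\<bar>X z + Y z\<bar> powr p + \<bar>X z - Y z\<bar> powr p) / 2)"
    using XY by (auto simp: in_Lp_def)
  have mX: "X \<in> borel_measurable M" and mY: "Y \<in> borel_measurable M" using X Y by (auto simp: in_Lp_def)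
  have iGH: "integrable M (\<lambda>z. (G z + H z) powr r)"
  proof (rule Bochner_Integration.integrable_bound[OF iB])
    show "(\<lambda>z. (G z + H z) powr r) \<in> borel_measurable M"
      unfolding G_def H_def using mX mY by measurable
    show "AE z in M. norm ((G z + H z) powr r) \<le> norm ((\<bar>X z + Y z\<bar> powr p + \<bar>X z - Y z\<bar> powr p) / 2)"
      using bound by (auto intro!: AE_I2 simp del: powr_numeral)
  qed
  have nnG: "0 \<le> G z" "0 \<le> H z" for z using p by (auto simp: G_def H_def)
  note RM = rev_minkowski[OF r nnG iG iH iGH]
  have e1: "(\<integral>z. G z powr r \<partial>M) powr (1 / r) = (Lp_norm M p X)\<^sup>2"
    unfolding Gr using p by (simp add: Lp_norm_sq r_def)
  have e2: "(\<integral>z. H z powr r \<partial>M) powr (1 / r) = (p - 1) * (Lp_norm M p Y)\<^sup>2"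
  proof -
    have "(\<integral>z. H z powr r \<partial>M) = (p - 1) powr r * I Y" by (simp add: Hr I_def)
    then have "(\<integral>z. H z powr r \<partial>M) powr (1 / r) = ((p - 1) powr r) powr (1 / r) * I Y powr (1 / r)"
      using p Inn[of Y] by (simp add: powr_mult)
    also have "\<dots> = (p - 1) * I Y powr (2 / p)" using p r by (simp add: powr_powr r_def)
    finally show ?thesis using p by (simp add: Lp_norm_sq I_def)
  qed
  define c where "c = (\<integral>z. (G z + H z) powr r \<partial>M)"
  have c0: "0 \<le> c" unfolding c_def using nnG by (intro integral_nonneg_AE) auto
  have cle: "c \<le> (I (\<lambda>z. X z + Y z) + I (\<lambda>z. X z - Y z)) / 2"
  proof -
    have "c \<le> (\<integral>z. (\<bar>X z + Y z\<bar> powr p + \<bar>X z - Y z\<bar> powr p) / 2 \<partial>M)"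
      unfolding c_def using iGH iB bound by (intro integral_mono) auto
    also have "\<dots> = (I (\<lambda>z. X z + Y z) + I (\<lambda>z. X z - Y z)) / 2"
      using XY by (simp add: I_def in_Lp_def)
    finally show ?thesis .
  qed
  define u where "u = I (\<lambda>z. X z + Y z) powr (1 / r)"
  define v where "v = I (\<lambda>z. X z - Y z) powr (1 / r)"
  have u0: "0 \<le> u" "0 \<le> v" by (auto simp: u_def v_def)
  have ur: "u powr r = I (\<lambda>z. X z + Y z)" "v powr r = I (\<lambda>z. X z - Y z)"
    using Inn r by (auto simp: u_def v_def powr_powr)
  have "(1/2) * u powr r + (1 - 1/2) * v powr r \<le> ((1/2) * u + (1 - 1/2) * v) powr r"
    using powr_concave_ineq[OF r u0, of "1/2"] by simp
  then have "(I (\<lambda>z. X z + Y z) + I (\<lambda>z. X z - Y z)) / 2 \<le> ((u + v) / 2) powr r"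
    by (simp add: ur add_divide_distrib)
  then have "c \<le> ((u + v) / 2) powr r" using cle by linarith
  then have "c powr (1 / r) \<le> (((u + v) / 2) powr r) powr (1 / r)"
    using c0 r by (intro powr_mono2) auto
  also have "\<dots> = (u + v) / 2" using r u0 by (simp add: powr_powr)
  finally have "c powr (1 / r) \<le> (u + v) / 2" .
  moreover have "u = (Lp_norm M p (\<lambda>z. X z + Y z))\<^sup>2" "v = (Lp_norm M p (\<lambda>z. X z - Y z))\<^sup>2"
    using p by (simp_all add: u_def v_def Lp_norm_sq I_def r_def)
  ultimately show ?thesis using RM e1 e2 by (simp add: c_def)
qed

lemma Lp_norm_scale2:
  assumes "0 < p"
  shows "Lp_norm M p (\<lambda>z. 2 * g z) = 2 * Lp_norm M p g"
proof -
  have nn: "0 \<le> (\<integral>x. \<bar>g x\<bar> powr p \<partial>M)" by (rule integral_nonneg_AE) auto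
  have "(\<integral>x. \<bar>2 * g x\<bar> powr p \<partial>M) = 2 powr p * (\<integral>x. \<bar>g x\<bar> powr p \<partial>M)"
    by (simp add: abs_mult powr_mult)
  then show ?thesis using nn assms by (simp add: Lp_norm_def powr_mult powr_powr)
qed

lemma sq_tri:
  assumes p: "1 < p" "p \<le> 2" and e1: "in_Lp M p e1" and e2: "in_Lp M p e2"
  shows "(Lp_norm M p (\<lambda>z. e1 z + e2 z))\<^sup>2 \<le> 2 * ((Lp_norm M p e1)\<^sup>2 + (Lp_norm M p e2)\<^sup>2)"
proof -
  have p0: "0 < p" using p by simp
  note B = bcl[OF p in_Lp_add[OF p0 e1 e2] in_Lp_diff[OF p0 e1 e2]]
  have f1: "(\<lambda>z. (e1 z + e2 z) + (e1 z - e2 z)) = (\<lambda>z. 2 * e1 z)" by (rule ext) simp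
  have f2: "(\<lambda>z. (e1 z + e2 z) - (e1 z - e2 z)) = (\<lambda>z. 2 * e2 z)" by (rule ext) simp
  have "0 \<le> (p - 1) * (Lp_norm M p (\<lambda>z. e1 z - e2 z))\<^sup>2" using p by simp
  then show ?thesis using B p0 by (simp add: f1 f2 Lp_norm_scale2 power_mult_distrib)
qed

lemma quad:
  assumes p: "1 < p" "p \<le> 2" and u: "in_Lp M p u" and v: "in_Lp M p v"
    and a: "in_Lp M p a" and b: "in_Lp M p b"
  shows "(Lp_norm M p (\<lambda>z. u z - v z))\<^sup>2 + (p - 1) * (Lp_norm M p (\<lambda>z. a z - b z))\<^sup>2
    \<le> (Lp_norm M p (\<lambda>z. u z - a z))\<^sup>2 + (Lp_norm M p (\<lambda>z. a z - v z))\<^sup>2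
      + (Lp_norm M p (\<lambda>z. u z - b z))\<^sup>2 + (Lp_norm M p (\<lambda>z. b z - v z))\<^sup>2"
proof -
  have p0: "0 < p" using p by simp
  note D = in_Lp_diff[OF p0]
  note B = bcl[OF p D[OF u v] D[OF a b]]
  have f1: "(\<lambda>z. (u z - v z) + (a z - b z)) = (\<lambda>z. (u z - b z) + (a z - v z))" by (rule ext) simp
  have f2: "(\<lambda>z. (u z - v z) - (a z - b z)) = (\<lambda>z. (u z - a z) + (b z - v z))" by (rule ext) simp
  note T1 = sq_tri[OF p D[OF u b] D[OF a v]]
  note T2 = sq_tri[OF p D[OF u a] D[OF b v]]
  show ?thesis using B T1 T2 unfolding f1 f2 by argo
qed

fun lvl :: "dvert \<Rightarrow> nat" where
  "lvl S = 0" | "lvl T = 0" | "lvl (Mid b u v) = Suc (max (lvl u) (lvl v))"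

lemma finite_edges: "finite (diamond_edges k)"
  by (induction k) auto

lemma edges_lvl: "(u, v) \<in> diamond_edges i \<Longrightarrow> lvl u \<le> i \<and> lvl v \<le> i \<and> max (lvl u) (lvl v) = i"
proof (induction i arbitrary: u v)
  case 0 then show ?case by simp
next
  case (Suc i)
  then obtain x y where xy: "(x, y) \<in> diamond_edges i"
    and e: "(u, v) \<in> {(x, Mid True x y), (Mid True x y, y), (x, Mid False x y), (Mid False x y, y)}"
    by auto
  have "lvl x \<le> i" "lvl y \<le> i" "max (lvl x) (lvl y) = i" using Suc.IH[OF xy] by auto
  then show ?case using e by (auto simp: max_def)
qed

definition phi :: "(dvert \<times> dvert) \<times> (bool \<times> bool) \<Rightarrow> dvert \<times> dvert" where
  "phi x = (case x of ((u, v), (b, s)) \<Rightarrow> if s then (u, Mid b u v) else (Mid b u v, v))"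

lemma edges_Suc_phi: "diamond_edges (Suc i) = phi ` (diamond_edges i \<times> UNIV)"
proof
  show "diamond_edges (Suc i) \<subseteq> phi ` (diamond_edges i \<times> UNIV)"
  proof
    fix e assume "e \<in> diamond_edges (Suc i)"
    then obtain x y where xy: "(x, y) \<in> diamond_edges i"
      and e: "e = (x, Mid True x y) \<or> e = (Mid True x y, y) \<or> e = (x, Mid False x y) \<or> e = (Mid False x y, y)"
      by auto
    have m: "((x, y), bs) \<in> diamond_edges i \<times> UNIV" for bs :: "bool \<times> bool" using xy by simp
    from e show "e \<in> phi ` (diamond_edges i \<times> UNIV)"
    proof (elim disjE)
      assume "e = (x, Mid True x y)"
      then have "e = phi ((x, y), (True, True))" by (simp add: phi_def)
      then show ?thesis using m by blast
    next
      assume "e = (Mid True x y, y)"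
      then have "e = phi ((x, y), (True, False))" by (simp add: phi_def)
      then show ?thesis using m by blast
    next
      assume "e = (x, Mid False x y)"
      then have "e = phi ((x, y), (False, True))" by (simp add: phi_def)
      then show ?thesis using m by blast
    next
      assume "e = (Mid False x y, y)"
      then have "e = phi ((x, y), (False, False))" by (simp add: phi_def)
      then show ?thesis using m by blast
    qed
  qed
next
  show "phi ` (diamond_edges i \<times> UNIV) \<subseteq> diamond_edges (Suc i)"
  proof
    fix e assume "e \<in> phi ` (diamond_edges i \<times> UNIV)"
    then obtain u v b s where uv: "(u, v) \<in> diamond_edges i" and e: "e = phi ((u, v), (b, s))"
      by auto
    have "phi ((u, v), (b, s)) \<in> {(u, Mid True u v), (Mid True u v, v), (u, Mid False u v), (Mid False u v, v)}"
      by (cases b; cases s) (simp_all add: phi_def)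
    then show "e \<in> diamond_edges (Suc i)" using uv e by force
  qed
qed

lemma inj_phi: "inj_on phi (diamond_edges i \<times> UNIV)"
proof (rule inj_onI)
  fix x y assume x: "x \<in> diamond_edges i \<times> UNIV" and y: "y \<in> diamond_edges i \<times> UNIV" and e: "phi x = phi y"
  obtain u v b s where xx: "x = ((u, v), (b, s))" by (metis prod.collapse)
  obtain u' v' b' s' where yy: "y = ((u', v'), (b', s'))" by (metis prod.collapse)
  have l1: "lvl u \<le> i" "lvl v \<le> i" "max (lvl u) (lvl v) = i" using edges_lvl[of u v i] x xx by auto
  have l2: "lvl u' \<le> i" "lvl v' \<le> i" "max (lvl u') (lvl v') = i" using edges_lvl[of u' v' i] y yy by auto
  show "x = y"
  proof (cases s; cases s')
    assume "s" "s'" then show ?thesis using e by (auto simp: xx yy phi_def)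
  next
    assume "s" "\<not> s'" then show ?thesis using e l1 l2 by (auto simp: xx yy phi_def)
  next
    assume "\<not> s" "s'" then show ?thesis using e l1 l2 by (auto simp: xx yy phi_def)
  next
    assume "\<not> s" "\<not> s'" then show ?thesis using e by (auto simp: xx yy phi_def)
  qed
qed

lemma sum_edges_Suc:
  fixes g :: "dvert \<Rightarrow> dvert \<Rightarrow> real"
  shows "(\<Sum>(x, y) \<in> diamond_edges (Suc i). g x y)
    = (\<Sum>(u, v) \<in> diamond_edges i. g u (Mid True u v) + g (Mid True u v) v + g u (Mid False u v) + g (Mid False u v) v)"
proof -
  have "(\<Sum>(x, y) \<in> diamond_edges (Suc i). g x y) = (\<Sum>z \<in> diamond_edges i \<times> UNIV. (\<lambda>(x, y). g x y) (phi z))"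
    unfolding edges_Suc_phi by (simp add: sum.reindex[OF inj_phi] comp_def)
  also have "\<dots> = (\<Sum>e \<in> diamond_edges i. \<Sum>bs \<in> (UNIV :: (bool \<times> bool) set). (\<lambda>(x, y). g x y) (phi (e, bs)))"
    by (simp add: sum.cartesian_product case_prod_unfold)
  also have "\<dots> = (\<Sum>(u, v) \<in> diamond_edges i. g u (Mid True u v) + g (Mid True u v) v + g u (Mid False u v) + g (Mid False u v) v)"
  proof (rule sum.cong[OF refl])
    fix e :: "dvert \<times> dvert"
    obtain u v where e: "e = (u, v)" by (metis prod.collapse)
    have U: "(UNIV :: (bool \<times> bool) set) = {(True, True), (True, False), (False, True), (False, False)}"
      by (auto simp: UNIV_bool)
    show "(\<Sum>bs \<in> (UNIV :: (bool \<times> bool) set). (\<lambda>(x, y). g x y) (phi (e, bs)))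
      = (\<lambda>(u, v). g u (Mid True u v) + g (Mid True u v) v + g u (Mid False u v) + g (Mid False u v) v) e"
      unfolding U by (simp add: e phi_def)
  qed
  finally show ?thesis .
qed

lemma sum_anti_Suc:
  fixes g :: "dvert \<Rightarrow> dvert \<Rightarrow> real"
  shows "(\<Sum>(x, y) \<in> anti_edges (Suc i). g x y) = (\<Sum>(u, v) \<in> diamond_edges i. g (Mid True u v) (Mid False u v))"
proof -
  have inj: "inj_on (\<lambda>(u, v). (Mid True u v, Mid False u v)) (diamond_edges i)"
    by (auto simp: inj_on_def)
  have A: "anti_edges (Suc i) = (\<lambda>(u, v). (Mid True u v, Mid False u v)) ` diamond_edges i"
    by (simp add: anti_edges_def)
  show ?thesis unfolding A sum.reindex[OF inj] by (simp add: comp_def case_prod_beta)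
qed

lemma vert_Suc:
  assumes "(u, v) \<in> diamond_edges i"
  shows "u \<in> diamond_vertices (Suc i)" "v \<in> diamond_vertices (Suc i)"
    "Mid b u v \<in> diamond_vertices (Suc i)"
  using assms unfolding diamond_vertices_def by (force simp: image_iff)+

lemma vert_mono: "diamond_vertices i \<subseteq> diamond_vertices (Suc i)"
proof
  fix x assume "x \<in> diamond_vertices i"
  then obtain e where "e \<in> diamond_edges i" "x = fst e \<or> x = snd e"
    unfolding diamond_vertices_def by auto
  then show "x \<in> diamond_vertices (Suc i)" using vert_Suc[of "fst e" "snd e" i] by auto
qed

lemma vert_le: "j \<le> k \<Longrightarrow> diamond_vertices j \<subseteq> diamond_vertices k"
  by (induction k) (auto simp: le_Suc_eq intro: vert_mono[THEN subsetD])

theorem lemma2p2: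
  fixes M :: "'m measure" and p :: real and k :: nat and f :: "dvert \<Rightarrow> 'm \<Rightarrow> real"
  assumes "1 < p" and "p \<le> 2"
    and "\<And>v. v \<in> diamond_vertices k \<Longrightarrow> in_Lp M p (f v)"
  shows "(Lp_norm M p (\<lambda>x. f S x - f T x))\<^sup>2
           + (p - 1) * (\<Sum>i = 1..k. \<Sum>(x, y) \<in> anti_edges i. (Lp_norm M p (\<lambda>z. f x z - f y z))\<^sup>2)
         \<le> (\<Sum>(x, y) \<in> diamond_edges k. (Lp_norm M p (\<lambda>z. f x z - f y z))\<^sup>2)"
proof -
  define Q where "Q x y = (Lp_norm M p (\<lambda>z. f x z - f y z))\<^sup>2" for x y
  have main: "j \<le> k \<Longrightarrow> Q S T + (p - 1) * (\<Sum>i = 1..j. \<Sum>(x, y) \<in> anti_edges i. Q x y)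
         \<le> (\<Sum>(x, y) \<in> diamond_edges j. Q x y)" for j
  proof (induction j)
    case 0 then show ?case by simp
  next
    case (Suc j)
    have IH: "Q S T + (p - 1) * (\<Sum>i = 1..j. \<Sum>(x, y) \<in> anti_edges i. Q x y) \<le> (\<Sum>(x, y) \<in> diamond_edges j. Q x y)"
      using Suc by simp
    have L: "\<And>v. v \<in> diamond_vertices (Suc j) \<Longrightarrow> in_Lp M p (f v)"
      using assms(3) vert_le[OF Suc.prems] by auto
    have step: "(\<Sum>(x, y) \<in> diamond_edges j. Q x y) + (p - 1) * (\<Sum>(x, y) \<in> anti_edges (Suc j). Q x y)
      \<le> (\<Sum>(x, y) \<in> diamond_edges (Suc j). Q x y)"
    proof -
      have "(\<Sum>(x, y) \<in> diamond_edges j. Q x y) + (p - 1) * (\<Sum>(x, y) \<in> anti_edges (Suc j). Q x y)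
        = (\<Sum>(u, v) \<in> diamond_edges j. Q u v + (p - 1) * Q (Mid True u v) (Mid False u v))"
        unfolding sum_anti_Suc by (simp add: sum_distrib_left sum.distrib case_prod_beta)
      also have "\<dots> \<le> (\<Sum>(u, v) \<in> diamond_edges j. Q u (Mid True u v) + Q (Mid True u v) v + Q u (Mid False u v) + Q (Mid False u v) v)"
      proof (rule sum_mono)
        fix e assume e: "e \<in> diamond_edges j"
        obtain u v where uv: "e = (u, v)" by (metis prod.collapse)
        have "(u, v) \<in> diamond_edges j" using e uv by simp
        note V = vert_Suc[OF this]
        show "(\<lambda>(u, v). Q u v + (p - 1) * Q (Mid True u v) (Mid False u v)) e
          \<le> (\<lambda>(u, v). Q u (Mid True u v) + Q (Mid True u v) v + Q u (Mid False u v) + Q (Mid False u v) v) e"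
          unfolding uv Q_def
          by simp (rule quad[OF assms(1,2) L[OF V(1)] L[OF V(2)] L[OF V(3)] L[OF V(3)]])
      qed
      also have "\<dots> = (\<Sum>(x, y) \<in> diamond_edges (Suc j). Q x y)"
        by (rule sum_edges_Suc[symmetric])
      finally show ?thesis .
    qed
    have "(\<Sum>i = 1..Suc j. \<Sum>(x, y) \<in> anti_edges i. Q x y)
      = (\<Sum>i = 1..j. \<Sum>(x, y) \<in> anti_edges i. Q x y) + (\<Sum>(x, y) \<in> anti_edges (Suc j). Q x y)"
      by simp
    then show ?case using IH step by (simp add: algebra_simps)
  qed
  show ?thesis using main[OF le_refl] by (simp add: Q_def)
qed


end
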